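(* Let $n\ge 3$ and let $\Delta=\Delta_{J(K_n)}$ be the simplicial complex on the vertex set $\{[ij]\mid 1\le i<j\le n\}$ (the edges of the complete graph $K_n$) whose Stanley–Reisner ideal is \[J(K_n)=\langle x_{ij}x_{kl},\ x_{ij}x_{ik}x_{jk}\mid i,j,k,l\text{ distinct}\rangle\subseteq \Bbbk[x_{ij}\mid 1\le i<j\le n].\] Then $\Delta$ consists of $n$ simplices of dimension $n-2$ (its facets), each meeting the others in $n-1$ vertices, and its face polynomial is \[f(\Delta,x)=x^{n-1}+n\Big((n-1)x^{n-2}+\binom{n-1}2x^{n-3}+\binom{n-1}3x^{n-4}+\cdots+(n-1)x+1\Big)-\binom n2x^{n-2}.\]
   Context: The Stanley–Reisner ideal of a simplicial complex $\Delta$ is generated by the monomials $\prod_{v\in\sigma}x_v$ for non-faces $\sigma$ of $\Delta$. For a simplicial complex $\Delta$ of dimension $\delta-1$ with $f_{i}$ faces of dimension $i$ ($f_{-1}=1$ for the empty face), the face polynomial is $f(\Delta,x)=\sum_{i=0}^{\delta}f_{i-1}x^{\delta-i}$. Here $x_{ji}:=x_{ij}$. *)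

theory Defs
  imports "HOL-Computational_Algebra.Polynomial"
begin

definition Kn_edges :: "nat \<Rightarrow> nat set set" where
  "Kn_edges n = {{i, j} | i j. 1 \<le> i \<and> i < j \<and> j \<le> n}"

text \<open>Supports of the monomial generators of J(K_n):
  x_ij x_kl (i,j,k,l distinct) and x_ij x_ik x_jk (i,j,k distinct).\<close>
definition JKn_gens :: "nat \<Rightarrow> nat set set set" where
  "JKn_gens n =
     {{{i, j}, {k, l}} | i j k l. {i, j, k, l} \<subseteq> {1..n} \<and> distinct [i, j, k, l]} \<union>
     {{{i, j}, {i, k}, {j, k}} | i j k. {i, j, k} \<subseteq> {1..n} \<and> distinct [i, j, k]}"

text \<open>Simplicial complex on vertex set V whose Stanley--Reisner ideal is generated by the
  squarefree monomials with supports in G: a subset is a face iff its squarefree monomial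
  is not in the ideal, i.e. iff it contains no generator support.\<close>
definition sr_complex :: "'v set \<Rightarrow> 'v set set \<Rightarrow> 'v set set" where
  "sr_complex V G = {\<sigma>. \<sigma> \<subseteq> V \<and> (\<forall>g\<in>G. \<not> g \<subseteq> \<sigma>)}"

definition facets :: "'v set set \<Rightarrow> 'v set set" where
  "facets \<Delta> = {F \<in> \<Delta>. \<forall>G\<in>\<Delta>. F \<subseteq> G \<longrightarrow> G = F}"

text \<open>delta = dim + 1 = maximal number of vertices of a face; f_{i-1} = number of faces with
  i vertices; f(Delta,x) = sum_{i=0}^{delta} f_{i-1} x^{delta-i}.\<close>
definition face_poly :: "'v set set \<Rightarrow> int poly" where
  "face_poly \<Delta> = (let \<delta> = Max (card ` \<Delta>) in
     (\<Sum>i = 0..\<delta>. monom (int (card {\<sigma>\<in>\<Delta>. card \<sigma> = i})) (\<delta> - i)))"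

end

theory Submission
  imports Defs
begin

definition star :: "nat \<Rightarrow> nat \<Rightarrow> nat set set" where
  "star n i = {{i, j} | j. j \<in> {1..n} \<and> j \<noteq> i}"

lemma mem_star_ctr: "e \<in> star n i \<Longrightarrow> i \<in> e"
  unfolding star_def by auto

lemma star_sub: "i \<in> {1..n} \<Longrightarrow> star n i \<subseteq> Kn_edges n"
  unfolding star_def Kn_edges_def
  apply clarsimp
  subgoal for j
    apply (cases "i < j")
     apply force
    apply (rule exI[of _ j], rule exI[of _ i]) by auto
  done

lemma Kn_edge_E:
  assumes "e \<in> Kn_edges n"
  obtains a b where "e = {a,b}" "1 \<le> a" "a < b" "b \<le> n"
  using assms unfolding Kn_edges_def by auto

lemma sub_star:
  assumes "\<sigma> \<subseteq> Kn_edges n" "\<forall>f\<in>\<sigma>. i \<in> f"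
  shows "\<sigma> \<subseteq> star n i"
proof
  fix f assume f: "f \<in> \<sigma>"
  then obtain a b where ab: "f = {a,b}" "1 \<le> a" "a < b" "b \<le> n"
    using assms(1) Kn_edge_E by blast
  have "i \<in> f" using f assms(2) by blast
  then show "f \<in> star n i"
    unfolding star_def using ab by (auto simp: insert_commute)
qed

lemma star_face:
  assumes "i \<in> {1..n}"
  shows "star n i \<in> sr_complex (Kn_edges n) (JKn_gens n)"
  unfolding sr_complex_def
proof (intro CollectI conjI ballI)
  show "star n i \<subseteq> Kn_edges n" using star_sub assms .
  fix g assume g: "g \<in> JKn_gens n"
  show "\<not> g \<subseteq> star n i"
  proof
    assume sub: "g \<subseteq> star n i"
    then have all: "\<forall>e\<in>g. i \<in> e" using mem_star_ctr by blast
    from g show False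
      unfolding JKn_gens_def
    proof (elim UnE CollectE exE conjE)
      fix a b c d assume "g = {{a, b}, {c, d}}" "distinct [a, b, c, d]"
      then show False using all by auto
    next
      fix a b c assume "g = {{a, b}, {a, c}, {b, c}}" "distinct [a, b, c]"
      then show False using all by auto
    qed
  qed
qed

lemma face_sub_star:
  assumes "\<sigma> \<in> sr_complex (Kn_edges n) (JKn_gens n)" "n \<ge> 1"
  shows "\<exists>i\<in>{1..n}. \<sigma> \<subseteq> star n i"
proof -
  have V: "\<sigma> \<subseteq> Kn_edges n" and G: "\<And>g. g \<in> JKn_gens n \<Longrightarrow> \<not> g \<subseteq> \<sigma>"
    using assms unfolding sr_complex_def by auto
  have H2: "e \<inter> f \<noteq> {}" if ef: "e \<in> \<sigma>" "f \<in> \<sigma>" for e f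
  proof
    assume disj: "e \<inter> f = {}"
    obtain a b where ab: "e = {a,b}" "1 \<le> a" "a < b" "b \<le> n"
      using V ef Kn_edge_E by blast
    obtain c d where cd: "f = {c,d}" "1 \<le> c" "c < d" "d \<le> n"
      using V ef Kn_edge_E by blast
    have gen: "{e, f} \<in> JKn_gens n"
    proof -
      have "a \<noteq> c" "a \<noteq> d" "b \<noteq> c" "b \<noteq> d" using disj ab(1) cd(1) by blast+
      then have dist: "distinct [a,b,c,d]" using ab(3) cd(3) by simp
      have sub: "{a,b,c,d} \<subseteq> {1..n}" using ab cd by auto
      show ?thesis unfolding JKn_gens_def ab(1) cd(1)
        by (rule UnI1, rule CollectI, intro exI[of _ a] exI[of _ b] exI[of _ c] exI[of _ d] conjI refl sub dist)
    qed
    show False using G[OF gen] ef by blast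
  qed
  have H3: "False" if abc: "{a,b} \<in> \<sigma>" "{a,c} \<in> \<sigma>" "{b,c} \<in> \<sigma>" "distinct [a,b,c]" for a b c
  proof -
    have ab_in: "{a,b} \<in> Kn_edges n" "{b,c} \<in> Kn_edges n" using V abc(1) abc(3) by blast+
    have edge_sub: "e \<subseteq> {1..n}" if "e \<in> Kn_edges n" for e
      using that unfolding Kn_edges_def by auto
    have abcn: "a \<in> {1..n}" "b \<in> {1..n}" "c \<in> {1..n}"
      using edge_sub[OF ab_in(1)] edge_sub[OF ab_in(2)] by auto
    have sub3: "{a,b,c} \<subseteq> {1..n}" using abcn by blast
    have gen: "{{a,b},{a,c},{b,c}} \<in> JKn_gens n"
      unfolding JKn_gens_def
      apply (rule UnI2, rule CollectI, rule exI[of _ a], rule exI[of _ b], rule exI[of _ c])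
      using sub3 abc(4) by simp
    show False using G[OF gen] abc(1-3) by blast
  qed
  show ?thesis
  proof (cases "\<sigma> = {}")
    case True then show ?thesis using assms(2) by auto
  next
    case False
    then obtain e where e: "e \<in> \<sigma>" by auto
    then obtain a b where ab: "e = {a,b}" "1 \<le> a" "a < b" "b \<le> n"
      using V Kn_edge_E by blast
    show ?thesis
    proof (cases "\<forall>f\<in>\<sigma>. a \<in> f")
      case True
      then have "\<sigma> \<subseteq> star n a" using sub_star[OF V] by blast
      moreover have "a \<in> {1..n}" using ab by auto
      ultimately show ?thesis by blast
    next
      case False
      then obtain f where f: "f \<in> \<sigma>" "a \<notin> f" by auto
      obtain c d where cd: "f = {c,d}" "1 \<le> c" "c < d" "d \<le> n"
        using V f Kn_edge_E by blast
      have "b \<in> f" using H2[OF e f(1)] ab f by auto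
      define c' where "c' = (if c = b then d else c)"
      have c': "f = {b,c'}" "c' \<noteq> b" "c' \<noteq> a"
        using cd f(2) \<open>b \<in> f\<close> unfolding c'_def by auto
      have "\<forall>g\<in>\<sigma>. b \<in> g"
      proof (rule ccontr)
        assume "\<not> (\<forall>g\<in>\<sigma>. b \<in> g)"
        then obtain g where g: "g \<in> \<sigma>" "b \<notin> g" by auto
        obtain p q where pq: "g = {p,q}" using V g Kn_edge_E by blast
        have "a \<in> g" using H2[OF e g(1)] ab g by auto
        moreover have "c' \<in> g" using H2[OF f(1) g(1)] c' g by auto
        ultimately have "g = {a,c'}" using pq c' by auto
        then have "{a,c'} \<in> \<sigma>" using g by simp
        moreover have "{a,b} \<in> \<sigma>" using e ab by simp
        moreover have "{b,c'} \<in> \<sigma>" using f c' by simp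
        moreover have "distinct [a,b,c']" using ab c' by auto
        ultimately show False using H3 by blast
      qed
      then have "\<sigma> \<subseteq> star n b" using sub_star[OF V] by blast
      moreover have "b \<in> {1..n}" using ab by auto
      ultimately show ?thesis by blast
    qed
  qed
qed

lemma face_iff:
  assumes "n \<ge> 1"
  shows "\<sigma> \<in> sr_complex (Kn_edges n) (JKn_gens n) \<longleftrightarrow> (\<exists>i\<in>{1..n}. \<sigma> \<subseteq> star n i)"
proof
  assume "\<exists>i\<in>{1..n}. \<sigma> \<subseteq> star n i"
  then obtain i where i: "i \<in> {1..n}" "\<sigma> \<subseteq> star n i" by auto
  show "\<sigma> \<in> sr_complex (Kn_edges n) (JKn_gens n)"
    using star_face[OF i(1)] i(2) unfolding sr_complex_def by blast
qed (use face_sub_star assms in blast)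


lemma smult_sum_right: "smult a (sum f A) = (\<Sum>i\<in>A. smult a (f i))"
  by (induction A rule: infinite_finite_induct) (simp_all add: smult_add_right)

lemma star_inj:
  assumes "n \<ge> 3" "i \<in> {1..n}" "j \<in> {1..n}" "star n i \<subseteq> star n j"
  shows "i = j"
proof (rule ccontr)
  assume ij: "i \<noteq> j"
  define k where "k = (if 1 \<notin> {i,j} then 1 else if 2 \<notin> {i,j} then 2 else (3::nat))"
  have k: "k \<in> {1..n}" "k \<noteq> i" "k \<noteq> j" using assms(1) ij unfolding k_def by auto
  have "{i,k} \<in> star n i" unfolding star_def using k by auto
  then have "j \<in> {i,k}" using assms(4) mem_star_ctr by blast
  then show False using ij k by auto
qed

lemma star_eq_image: "star n i = (\<lambda>j. {i,j}) ` ({1..n} - {i})"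
  unfolding star_def by auto

lemma card_star:
  assumes "i \<in> {1..n}"
  shows "card (star n i) = n - 1"
proof -
  have "inj_on (\<lambda>j. {i,j}) ({1..n} - {i})"
    by (rule inj_onI) (auto simp: doubleton_eq_iff)
  then have "card (star n i) = card ({1..n} - {i})"
    unfolding star_eq_image by (rule card_image)
  also have "\<dots> = n - 1" using assms by simp
  finally show ?thesis .
qed

lemma finite_star: "finite (star n i)"
  unfolding star_eq_image by simp

lemma finite_Kn: "finite (Kn_edges n)"
proof -
  have "Kn_edges n \<subseteq> Pow {1..n}" unfolding Kn_edges_def by auto
  then show ?thesis by (rule finite_subset) simp
qed

lemma Kn_edges_eq: "Kn_edges n = {A. A \<subseteq> {1..n} \<and> card A = 2}"
proof (intro set_eqI iffI)
  fix A assume "A \<in> Kn_edges n"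
  then show "A \<in> {A. A \<subseteq> {1..n} \<and> card A = 2}" unfolding Kn_edges_def by auto
next
  fix A assume "A \<in> {A. A \<subseteq> {1..n} \<and> card A = 2}"
  then obtain x y where xy: "A = {x,y}" "x \<noteq> y" "A \<subseteq> {1..n}" by (auto simp: card_2_iff)
  show "A \<in> Kn_edges n"
  proof (cases "x < y")
    case True then show ?thesis unfolding Kn_edges_def using xy by auto
  next
    case False
    then have "y < x" using xy by auto
    have "A = {y,x}" using xy by (simp add: insert_commute)
    then show ?thesis unfolding Kn_edges_def using xy \<open>y < x\<close>
      by (intro CollectI exI[of _ y] exI[of _ x]) auto
  qed
qed

lemma card_Kn: "card (Kn_edges n) = n choose 2"
  unfolding Kn_edges_eq using n_subsets[of "{1..n}" 2] by simp

lemma star_inter: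
  assumes "i \<noteq> j" "i \<in> {1..n}"
  shows "star n i \<inter> star n j \<subseteq> {{i,j}}"
proof
  fix e assume e: "e \<in> star n i \<inter> star n j"
  then have "i \<in> e" "j \<in> e" using mem_star_ctr by blast+
  moreover obtain a b where "e = {a,b}" using e star_sub[OF assms(2)] Kn_edge_E by blast
  ultimately show "e \<in> {{i,j}}" using assms(1) by auto
qed

theorem lemma4p2:
  fixes n :: nat
  assumes "n \<ge> 3"
  defines "\<Delta> \<equiv> sr_complex (Kn_edges n) (JKn_gens n)"
  shows "card (facets \<Delta>) = n
    \<and> (\<forall>F\<in>facets \<Delta>. card F = n - 1 \<and> card (F \<inter> \<Union>(facets \<Delta> - {F})) = n - 1)
    \<and> face_poly \<Delta> = monom 1 (n - 1)
        + smult (int n) (\<Sum>k = 1..n - 1. monom (int ((n - 1) choose k)) (n - 1 - k))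
        - monom (int (n choose 2)) (n - 2)"
proof -
  have n1: "n \<ge> 1" using assms by simp
  have D: "\<sigma> \<in> \<Delta> \<longleftrightarrow> (\<exists>i\<in>{1..n}. \<sigma> \<subseteq> star n i)" for \<sigma>
    unfolding \<Delta>_def using face_iff[OF n1] .
  have inj: "inj_on (star n) {1..n}"
    by (rule inj_onI) (use star_inj[OF assms(1)] in blast)
  have FAC: "facets \<Delta> = star n ` {1..n}"
  proof (intro set_eqI iffI)
    fix F assume "F \<in> facets \<Delta>"
    then have F: "F \<in> \<Delta>" "\<And>G. G \<in> \<Delta> \<Longrightarrow> F \<subseteq> G \<Longrightarrow> G = F"
      unfolding facets_def by auto
    then obtain i where i: "i \<in> {1..n}" "F \<subseteq> star n i" using D[of F] F(1) by blast
    have "star n i \<in> \<Delta>" using D[of "star n i"] i(1) by blast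
    then have "star n i = F" using F(2) i(2) by simp
    then show "F \<in> star n ` {1..n}" using i(1) by blast
  next
    fix F assume "F \<in> star n ` {1..n}"
    then obtain i where i: "i \<in> {1..n}" "F = star n i" by blast
    have "F \<in> \<Delta>" using D[of F] i by blast
    moreover have "G = F" if GG: "G \<in> \<Delta>" "F \<subseteq> G" for G
    proof -
      obtain j where j: "j \<in> {1..n}" "G \<subseteq> star n j" using D[of G] GG(1) by blast
      have "i = j" using star_inj[OF assms(1) i(1) j(1)] GG(2) j(2) i(2) by blast
      then show ?thesis using GG(2) j(2) i(2) by blast
    qed
    ultimately show "F \<in> facets \<Delta>" unfolding facets_def by blast
  qed
  have P1: "card (facets \<Delta>) = n"
    unfolding FAC using card_image[OF inj] by simp
  have P2: "\<forall>F\<in>facets \<Delta>. card F = n - 1 \<and> card (F \<inter> \<Union>(facets \<Delta> - {F})) = n - 1"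
  proof
    fix F assume "F \<in> facets \<Delta>"
    then obtain i where i: "i \<in> {1..n}" "F = star n i" unfolding FAC by blast
    have "F \<subseteq> \<Union>(facets \<Delta> - {F})"
    proof
      fix e assume "e \<in> F"
      then obtain j where j: "e = {i,j}" "j \<in> {1..n}" "j \<noteq> i"
        using i(2) unfolding star_def by blast
      have "e \<in> star n j" unfolding star_def using j i(1) by (auto simp: insert_commute)
      moreover have "star n j \<noteq> F" using star_inj[OF assms(1) i(1) j(2)] i(2) j(3) by blast
      moreover have "star n j \<in> facets \<Delta>" unfolding FAC using j(2) by blast
      ultimately show "e \<in> \<Union>(facets \<Delta> - {F})" by blast
    qed
    then have "F \<inter> \<Union>(facets \<Delta> - {F}) = F" by blast
    then show "card F = n - 1 \<and> card (F \<inter> \<Union>(facets \<Delta> - {F})) = n - 1"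
      using card_star[OF i(1)] i(2) by simp
  qed
  have Dsub: "\<Delta> \<subseteq> Pow (Kn_edges n)"
  proof
    fix \<sigma> assume "\<sigma> \<in> \<Delta>"
    then obtain i where "i \<in> {1..n}" "\<sigma> \<subseteq> star n i" using D[of \<sigma>] by blast
    then show "\<sigma> \<in> Pow (Kn_edges n)" using star_sub by blast
  qed
  have finD: "finite \<Delta>" using Dsub finite_Kn by (meson finite_Pow_iff finite_subset)
  have cardle: "card \<sigma> \<le> n - 1" if sD: "\<sigma> \<in> \<Delta>" for \<sigma>
  proof -
    obtain i where i: "i \<in> {1..n}" "\<sigma> \<subseteq> star n i" using D[of \<sigma>] sD by blast
    show ?thesis using card_mono[OF finite_star i(2)] card_star[OF i(1)] by simp
  qed
  have s1: "star n 1 \<in> \<Delta>" using D[of "star n 1"] n1 by auto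
  have MAX: "Max (card ` \<Delta>) = n - 1"
  proof (rule Max_eqI)
    show "finite (card ` \<Delta>)" using finD by simp
    show "y \<le> n - 1" if "y \<in> card ` \<Delta>" for y using that cardle by blast
    have "card (star n 1) = n - 1" using card_star[of 1 n] n1 by simp
    then show "n - 1 \<in> card ` \<Delta>" using s1 by (metis image_eqI)
  qed
  define c where "c k = card {\<sigma>\<in>\<Delta>. card \<sigma> = k}" for k
  have c0: "c 0 = 1"
  proof -
    have "{\<sigma>\<in>\<Delta>. card \<sigma> = 0} = {{}}"
    proof (intro set_eqI iffI)
      fix \<sigma> assume "\<sigma> \<in> {\<sigma>\<in>\<Delta>. card \<sigma> = 0}"
      then have "\<sigma> \<subseteq> Kn_edges n" "card \<sigma> = 0" using Dsub by auto
      then show "\<sigma> \<in> {{}}" using finite_Kn[of n] by (simp add: finite_subset)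
    next
      fix \<sigma> :: "nat set set" assume "\<sigma> \<in> {{}}"
      then show "\<sigma> \<in> {\<sigma>\<in>\<Delta>. card \<sigma> = 0}" using D[of "{}"] n1 by auto
    qed
    then show ?thesis unfolding c_def by simp
  qed
  have c1: "c 1 = n choose 2"
  proof -
    have "{\<sigma>\<in>\<Delta>. card \<sigma> = 1} = (\<lambda>e. {e}) ` Kn_edges n"
    proof (intro set_eqI iffI)
      fix \<sigma> assume "\<sigma> \<in> {\<sigma>\<in>\<Delta>. card \<sigma> = 1}"
      then obtain e where "\<sigma> = {e}" "\<sigma> \<in> \<Delta>" by (auto simp: card_1_singleton_iff)
      then show "\<sigma> \<in> (\<lambda>e. {e}) ` Kn_edges n" using Dsub by auto
    next
      fix \<sigma> assume "\<sigma> \<in> (\<lambda>e. {e}) ` Kn_edges n"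
      then obtain e where e: "\<sigma> = {e}" "e \<in> Kn_edges n" by blast
      then obtain a b where ab: "e = {a,b}" "1 \<le> a" "a < b" "b \<le> n" using Kn_edge_E by blast
      have "e \<in> star n a" unfolding star_def using ab by auto
      then have "\<sigma> \<in> \<Delta>" using D[of \<sigma>] e(1) ab by auto
      then show "\<sigma> \<in> {\<sigma>\<in>\<Delta>. card \<sigma> = 1}" using e(1) by simp
    qed
    then show ?thesis unfolding c_def using card_Kn card_image[of "\<lambda>e. {e}" "Kn_edges n"]
      by (simp add: inj_on_def)
  qed
  have ck: "c k = n * ((n - 1) choose k)" if k: "k \<ge> 2" for k
  proof -
    have "{\<sigma>\<in>\<Delta>. card \<sigma> = k} = (\<Union>i\<in>{1..n}. {\<sigma>. \<sigma> \<subseteq> star n i \<and> card \<sigma> = k})"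
      by (auto simp: D)
    also have "card \<dots> = (\<Sum>i\<in>{1..n}. card {\<sigma>. \<sigma> \<subseteq> star n i \<and> card \<sigma> = k})"
    proof (rule card_UN_disjoint)
      show "finite {1..n}" by simp
      show "\<forall>i\<in>{1..n}. finite {\<sigma>. \<sigma> \<subseteq> star n i \<and> card \<sigma> = k}"
        using finite_star by simp
      show "\<forall>i\<in>{1..n}. \<forall>j\<in>{1..n}. i \<noteq> j \<longrightarrow>
          {\<sigma>. \<sigma> \<subseteq> star n i \<and> card \<sigma> = k} \<inter> {\<sigma>. \<sigma> \<subseteq> star n j \<and> card \<sigma> = k} = {}"
      proof (intro ballI impI)
        fix i j assume ij: "i \<in> {1..n}" "j \<in> {1..n}" "i \<noteq> j"
        show "{\<sigma>. \<sigma> \<subseteq> star n i \<and> card \<sigma> = k} \<inter> {\<sigma>. \<sigma> \<subseteq> star n j \<and> card \<sigma> = k} = {}"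
        proof (rule ccontr)
          assume "\<not> ?thesis"
          then obtain \<sigma> where s: "\<sigma> \<subseteq> star n i" "\<sigma> \<subseteq> star n j" "card \<sigma> = k" by blast
          then have "\<sigma> \<subseteq> {{i,j}}" using star_inter[OF ij(3) ij(1)] by blast
          then have "card \<sigma> \<le> 1" using card_mono[of "{{i,j}}" \<sigma>] by simp
          then show False using s(3) k by simp
        qed
      qed
    qed
    also have "\<dots> = (\<Sum>i\<in>{1..n}. (n - 1) choose k)"
      by (rule sum.cong) (simp_all add: n_subsets finite_star card_star)
    also have "\<dots> = n * ((n - 1) choose k)" by simp
    finally show ?thesis unfolding c_def .
  qed
  define m where "m = n - 1"
  have m2: "m \<ge> 2" and nm: "n = Suc m" using assms unfolding m_def by auto
  have FP: "face_poly \<Delta> = (\<Sum>i = 0..m. monom (int (c i)) (m - i))"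
    unfolding face_poly_def Let_def MAX c_def m_def ..
  also have "\<dots> = monom 1 m + monom (int (n choose 2)) (m - 1)
       + (\<Sum>i = 2..m. monom (int n * int ((n - 1) choose i)) (m - i))"
  proof -
    have "(\<Sum>i = 0..m. monom (int (c i)) (m - i)) = monom (int (c 0)) m +
       (monom (int (c 1)) (m - 1) + (\<Sum>i = 2..m. monom (int (c i)) (m - i)))"
      using m2 by (simp add: sum.atLeast_Suc_atMost numeral_2_eq_2)
    also have "(\<Sum>i = 2..m. monom (int (c i)) (m - i)) =
        (\<Sum>i = 2..m. monom (int n * int ((n - 1) choose i)) (m - i))"
      by (rule sum.cong) (simp_all add: ck)
    finally show ?thesis using c0 c1 by (simp add: add.assoc)
  qed
  also have "\<dots> = monom 1 (n - 1)
        + smult (int n) (\<Sum>k = 1..n - 1. monom (int ((n - 1) choose k)) (n - 1 - k))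
        - monom (int (n choose 2)) (n - 2)"
  proof -
    have "smult (int n) (\<Sum>k = 1..n - 1. monom (int ((n - 1) choose k)) (n - 1 - k))
        = (\<Sum>k = 1..m. monom (int n * int ((n - 1) choose k)) (m - k))"
      unfolding smult_sum_right smult_monom m_def ..
    also have "\<dots> = monom (int n * int m) (m - 1)
        + (\<Sum>k = 2..m. monom (int n * int ((n - 1) choose k)) (m - k))"
      using m2 by (simp add: sum.atLeast_Suc_atMost numeral_2_eq_2 m_def)
    finally have S: "smult (int n) (\<Sum>k = 1..n - 1. monom (int ((n - 1) choose k)) (n - 1 - k))
        = monom (int n * int m) (m - 1)
        + (\<Sum>k = 2..m. monom (int n * int ((n - 1) choose k)) (m - k))" .
    have "int n * int m = int (n choose 2) + int (n choose 2)"
    proof -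
      have "even (n * m)" using nm by simp
      then have "n * m = 2 * (n choose 2)" using nm by (simp add: choose_two)
      then have "int (n * m) = int (2 * (n choose 2))" by (rule arg_cong)
      then show ?thesis by simp
    qed
    then have M: "monom (int n * int m) (m - 1) = monom (int (n choose 2)) (m - 1) + monom (int (n choose 2)) (m - 1)"
      by (simp add: add_monom)
    have "n - 2 = m - 1" "n - 1 = m" using nm by auto
    then show ?thesis unfolding S M by simp
  qed
  finally show ?thesis using P1 P2 by simp
qed

end
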